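(* Let $\mathcal{I}$ be finite, $\beta$ a positive integer, and for $\mathbf{Q}\in B(\mathcal{L})$ let $$p^{\beta}(\mathbf{Q})=\log\left(\sum_{S\in\mathcal{P}_{\mathbf{Q}}}\min\{\beta,|S|\}\right).$$ Then $p^\beta$ is an arbitrage-free instance-independent pricing function.
   Context: $\mathcal{I}$ is a set of database instances; queries are deterministic functions on $\mathcal{I}$; a query bundle is a finite tuple of queries from a language $\mathcal{L}$, evaluated componentwise; $B(\mathcal{L})$ is the set of bundles, closed under concatenation $\mathbf{Q}_1,\mathbf{Q}_2$. $\mathcal{P}_{\mathbf{Q}}$ is the partition of $\mathcal{I}$ into the equivalence classes of $D\sim D'\iff\mathbf{Q}(D)=\mathbf{Q}(D')$. An instance-independent pricing function $p$ is arbitrage-free if (i) whenever for all $D',D''\in\mathcal{I}$, $\mathbf{Q}_2(D')=\mathbf{Q}_2(D'')$ implies $\mathbf{Q}_1(D')=\mathbf{Q}_1(D'')$, we have $p(\mathbf{Q}_2)\ge p(\mathbf{Q}_1)$; and (ii) $p(\mathbf{Q}_1,\mathbf{Q}_2)\le p(\mathbf{Q}_1)+p(\mathbf{Q}_2)$ for all bundles. *)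

theory Defs
  imports Main Complex_Main
begin

text \<open>A query bundle is a finite list of queries from the language L (bundles = lists L),
evaluated componentwise; concatenation of bundles is list append.\<close>

definition bundle_eval :: "('i \<Rightarrow> 'o) list \<Rightarrow> 'i \<Rightarrow> 'o list" where
  "bundle_eval Qs D = map (\<lambda>q. q D) Qs"

definition bundle_partition :: "('i \<Rightarrow> 'o) list \<Rightarrow> 'i set set" where
  "bundle_partition Qs = UNIV // {(D, D'). bundle_eval Qs D = bundle_eval Qs D'}"

definition price_beta :: "nat \<Rightarrow> ('i \<Rightarrow> 'o) list \<Rightarrow> real" where
  "price_beta \<beta> Qs = ln (\<Sum>S\<in>bundle_partition Qs. real (min \<beta> (card S)))"

definition arbitrage_free :: "('i \<Rightarrow> 'o) set \<Rightarrow> (('i \<Rightarrow> 'o) list \<Rightarrow> real) \<Rightarrow> bool" where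
  "arbitrage_free L p \<longleftrightarrow>
     (\<forall>Q1\<in>lists L. \<forall>Q2\<in>lists L.
        (\<forall>D' D''. bundle_eval Q2 D' = bundle_eval Q2 D'' \<longrightarrow> bundle_eval Q1 D' = bundle_eval Q1 D'')
        \<longrightarrow> p Q2 \<ge> p Q1) \<and>
     (\<forall>Q1\<in>lists L. \<forall>Q2\<in>lists L. p (Q1 @ Q2) \<le> p Q1 + p Q2)"

end

theory Submission
  imports Defs
begin

definition G :: "nat \<Rightarrow> ('i \<Rightarrow> 'x) \<Rightarrow> nat" where
  "G \<beta> e = (\<Sum>v\<in>range e. min \<beta> (card {D. e D = v}))"

lemma part_eq: "UNIV // {(D, D'). e D = e D'} = (\<lambda>v. {D. e D = v}) ` range e"
proof -
  have "UNIV // {(D, D'). e D = e D'} = (\<lambda>x. {(D, D'). e D = e D'} `` {x}) ` UNIV"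
    unfolding quotient_def by auto
  also have "\<dots> = (\<lambda>x. {D. e D = e x}) ` UNIV"
  proof -
    have "{(D, D'). e D = e D'} `` {x} = {D. e D = e x}" for x by auto
    then show ?thesis by simp
  qed
  finally show ?thesis by (simp add: image_image)
qed

lemma sum_part:
  "(\<Sum>S\<in>UNIV // {(D, D'). e D = e D'}. g (card S)) = (\<Sum>v\<in>range e. g (card {D. e D = v}))"
proof -
  have inj: "inj_on (\<lambda>v. {D. e D = v}) (range e)"
    by (auto simp: inj_on_def)
  show ?thesis unfolding part_eq by (simp add: sum.reindex[OF inj])
qed

lemma price_G: "price_beta \<beta> Qs = ln (real (G \<beta> (bundle_eval Qs)))"
  unfolding price_beta_def bundle_partition_def G_def sum_part[where g="\<lambda>n. real (min \<beta> n)"] by simp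

lemma G_pos:
  fixes e :: "'i::finite \<Rightarrow> 'x"
  assumes "\<beta> > 0" shows "G \<beta> e \<ge> 1"
proof -
  obtain D0 :: 'i where True by simp
  have "min \<beta> (card {D. e D = e D0}) \<le> G \<beta> e"
    unfolding G_def by (rule member_le_sum) auto
  moreover have "card {D. e D = e D0} \<ge> 1"
    by (metis (mono_tags, lifting) One_nat_def Suc_leI card_gt_0_iff empty_iff finite mem_Collect_eq)
  ultimately show ?thesis using assms by linarith
qed

lemma min_subadd: "finite V \<Longrightarrow> min (\<beta>::nat) (sum c V) \<le> (\<Sum>v\<in>V. min \<beta> (c v))"
proof (induction V rule: finite_induct)
  case empty then show ?case by simp
next
  case (insert x F)
  have "min \<beta> (sum c (insert x F)) = min \<beta> (c x + sum c F)" using insert by simp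
  also have "\<dots> \<le> min \<beta> (c x) + min \<beta> (sum c F)" by simp
  also have "\<dots> \<le> min \<beta> (c x) + (\<Sum>v\<in>F. min \<beta> (c v))" using insert by simp
  finally show ?case using insert by simp
qed

lemma G_mono:
  fixes e1 :: "'i::finite \<Rightarrow> 'x" and e2 :: "'i \<Rightarrow> 'y"
  assumes det: "\<And>D D'. e2 D = e2 D' \<Longrightarrow> e1 D = e1 D'"
  shows "G \<beta> e1 \<le> G \<beta> e2"
proof -
  define \<phi> where "\<phi> v = e1 (SOME D. e2 D = v)" for v
  have phi: "\<phi> (e2 D) = e1 D" for D
  proof -
    have "e2 (SOME D'. e2 D' = e2 D) = e2 D" by (rule someI) (rule refl)
    then show ?thesis unfolding \<phi>_def by (rule det)
  qed
  have img: "\<phi> ` range e2 \<subseteq> range e1" using phi by auto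
  have card_eq: "card {D. e1 D = u} = (\<Sum>v\<in>{v \<in> range e2. \<phi> v = u}. card {D. e2 D = v})" for u
  proof -
    have "card {D. e1 D = u} = (\<Sum>D\<in>{D. e1 D = u}. 1)" by simp
    also have "\<dots> = (\<Sum>v\<in>{v \<in> range e2. \<phi> v = u}. \<Sum>D\<in>{x \<in> {D. e1 D = u}. e2 x = v}. 1)"
      by (rule sum.group[symmetric]) (auto simp: phi)
    also have "\<dots> = (\<Sum>v\<in>{v \<in> range e2. \<phi> v = u}. card {D. e2 D = v})"
    proof (rule sum.cong[OF refl])
      fix v assume "v \<in> {v \<in> range e2. \<phi> v = u}"
      then have "{x \<in> {D. e1 D = u}. e2 x = v} = {D. e2 D = v}" using phi by (auto, metis phi)
      then show "(\<Sum>D\<in>{x \<in> {D. e1 D = u}. e2 x = v}. 1) = card {D. e2 D = v}" by simp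
    qed
    finally show ?thesis .
  qed
  have "G \<beta> e1 = (\<Sum>u\<in>range e1. min \<beta> (\<Sum>v\<in>{v \<in> range e2. \<phi> v = u}. card {D. e2 D = v}))"
    unfolding G_def card_eq ..
  also have "\<dots> \<le> (\<Sum>u\<in>range e1. \<Sum>v\<in>{v \<in> range e2. \<phi> v = u}. min \<beta> (card {D. e2 D = v}))"
    by (rule sum_mono, rule min_subadd) simp
  also have "\<dots> = G \<beta> e2"
    unfolding G_def by (rule sum.group) (use img in auto)
  finally show ?thesis .
qed

lemma G_mult:
  fixes e1 :: "'i::finite \<Rightarrow> 'x" and e2 :: "'i \<Rightarrow> 'y"
  assumes "\<beta> > 0"
  shows "G \<beta> (\<lambda>D. (e1 D, e2 D)) \<le> G \<beta> e1 * G \<beta> e2"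
proof -
  let ?c = "\<lambda>w. min \<beta> (card {D. (e1 D, e2 D) = w})"
  have "G \<beta> (\<lambda>D. (e1 D, e2 D)) = (\<Sum>w\<in>range (\<lambda>D. (e1 D, e2 D)). ?c w)"
    unfolding G_def ..
  also have "\<dots> \<le> (\<Sum>w\<in>range e1 \<times> range e2. ?c w)"
    by (rule sum_mono2) auto
  also have "\<dots> \<le> (\<Sum>w\<in>range e1 \<times> range e2. min \<beta> (card {D. e1 D = fst w}) * min \<beta> (card {D. e2 D = snd w}))"
  proof (rule sum_mono)
    fix w assume "w \<in> range e1 \<times> range e2"
    obtain u v where w: "w = (u, v)" by force
    show "?c w \<le> min \<beta> (card {D. e1 D = fst w}) * min \<beta> (card {D. e2 D = snd w})"
    proof (cases "card {D. (e1 D, e2 D) = w} = 0")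
      case True then show ?thesis by simp
    next
      case False
      then obtain D0 where D0: "(e1 D0, e2 D0) = w" by fastforce
      have s1: "{D. (e1 D, e2 D) = w} \<subseteq> {D. e1 D = fst w}" using w by auto
      have c1: "card {D. (e1 D, e2 D) = w} \<le> card {D. e1 D = fst w}"
        by (rule card_mono[OF _ s1]) simp
      have "card {D. e2 D = snd w} \<ge> 1"
        using D0 w by (metis (mono_tags, lifting) One_nat_def Suc_leI card_gt_0_iff empty_iff finite mem_Collect_eq snd_conv)
      then have m2: "min \<beta> (card {D. e2 D = snd w}) \<ge> 1" using assms by simp
      have "?c w \<le> min \<beta> (card {D. e1 D = fst w})" using c1 by simp
      also have "\<dots> \<le> min \<beta> (card {D. e1 D = fst w}) * min \<beta> (card {D. e2 D = snd w})"
        using m2 by simp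
      finally show ?thesis .
    qed
  qed
  also have "\<dots> = G \<beta> e1 * G \<beta> e2"
    unfolding G_def sum_product sum.cartesian_product by (simp add: case_prod_beta)
  finally show ?thesis .
qed

lemma rel_append: "{(D, D'). bundle_eval (Q1 @ Q2) D = bundle_eval (Q1 @ Q2) D'}
  = {(D, D'). (bundle_eval Q1 D, bundle_eval Q2 D) = (bundle_eval Q1 D', bundle_eval Q2 D')}"
  by (auto simp: bundle_eval_def)

theorem lemma22:
  fixes L :: "('i::finite \<Rightarrow> 'o) set" and \<beta> :: nat
  assumes "\<beta> > 0"
  shows "arbitrage_free L (price_beta \<beta> :: ('i \<Rightarrow> 'o) list \<Rightarrow> real)"
  unfolding arbitrage_free_def
proof (intro conjI ballI impI)
  fix Q1 Q2 :: "('i \<Rightarrow> 'o) list"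
  assume h: "\<forall>D' D''. bundle_eval Q2 D' = bundle_eval Q2 D'' \<longrightarrow> bundle_eval Q1 D' = bundle_eval Q1 D''"
  have "G \<beta> (bundle_eval Q1) \<le> G \<beta> (bundle_eval Q2)"
    by (rule G_mono) (use h in blast)
  moreover have "G \<beta> (bundle_eval Q1) \<ge> 1" by (rule G_pos[OF assms])
  ultimately show "price_beta \<beta> Q1 \<le> price_beta \<beta> Q2"
    unfolding price_G by simp
next
  fix Q1 Q2 :: "('i \<Rightarrow> 'o) list"
  have eq: "price_beta \<beta> (Q1 @ Q2) = ln (real (G \<beta> (\<lambda>D. (bundle_eval Q1 D, bundle_eval Q2 D))))"
    unfolding price_beta_def bundle_partition_def rel_append sum_part[where g="\<lambda>n. real (min \<beta> n)"] G_def by simp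
  have le: "G \<beta> (\<lambda>D. (bundle_eval Q1 D, bundle_eval Q2 D)) \<le> G \<beta> (bundle_eval Q1) * G \<beta> (bundle_eval Q2)"
    by (rule G_mult[OF assms])
  have p1: "G \<beta> (bundle_eval Q1) \<ge> 1" and p2: "G \<beta> (bundle_eval Q2) \<ge> 1"
    and p3: "G \<beta> (\<lambda>D. (bundle_eval Q1 D, bundle_eval Q2 D)) \<ge> 1"
    by (rule G_pos[OF assms])+
  have "ln (real (G \<beta> (\<lambda>D. (bundle_eval Q1 D, bundle_eval Q2 D))))
        \<le> ln (real (G \<beta> (bundle_eval Q1)) * real (G \<beta> (bundle_eval Q2)))"
    using le p1 p2 p3 by (subst ln_le_cancel_iff) (simp_all, metis of_nat_le_iff of_nat_mult)
  also have "\<dots> = ln (real (G \<beta> (bundle_eval Q1))) + ln (real (G \<beta> (bundle_eval Q2)))"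
    using p1 p2 by (simp add: ln_mult)
  finally have fin: "ln (real (G \<beta> (\<lambda>D. (bundle_eval Q1 D, bundle_eval Q2 D))))
     \<le> ln (real (G \<beta> (bundle_eval Q1))) + ln (real (G \<beta> (bundle_eval Q2)))" .
  show "price_beta \<beta> (Q1 @ Q2) \<le> price_beta \<beta> Q1 + price_beta \<beta> Q2"
    by (subst eq) (unfold price_G, rule fin)
qed

end
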